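(* Let $n\ge 2$, $1\leq i\leq n-1$, and let $$k=\begin{cases} n, & \text{if } i=1 \text{ or } i=n-1,\\ \lceil n/i\rceil+1, & \text{if } 1<i\leq n/2,\\ \lceil n/(n-i)\rceil+1, & \text{if } n/2\leq i<n-1.\end{cases}$$ Then there exist $i$-dimensional linear subspaces $H_1,\dots,H_k$ of $\mathbb{R}^n$ such that: if $E\subset S^{n-1}$ is nonempty, closed, and $R_{H_j}E=E$ for $j=1,\dots,k$, then $E=S^{n-1}$. Consequently, for these subspaces, if $F\subset\mathbb{R}^n$ is closed and $R_{H_j}F=F$ for $j=1,\dots,k$, then $F$ is a union of spheres centered at the origin; and if $K$ is a convex body in $\mathbb{R}^n$ with $R_{H_j}K=K$ for $j=1,\dots,k$, then $K$ is a ball centered at the origin.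
   Context: For a linear subspace $H$ of $\mathbb{R}^n$, $R_H$ is the reflection $x\mapsto 2(x|H)-x$, with $x|H$ the orthogonal projection onto $H$. A convex body is a compact convex set with nonempty interior. $S^{n-1}$ is the unit sphere. *)

theory Defs
  imports "HOL-Analysis.Analysis"
begin

definition orth_proj :: "'a::euclidean_space set \<Rightarrow> 'a \<Rightarrow> 'a" where
  "orth_proj H x = (THE p. p \<in> H \<and> (\<forall>h\<in>H. (x - p) \<bullet> h = 0))"

definition refl_sub :: "'a::euclidean_space set \<Rightarrow> 'a \<Rightarrow> 'a" where
  "refl_sub H x = 2 *\<^sub>R orth_proj H x - x"

definition num_refl :: "nat \<Rightarrow> nat \<Rightarrow> nat" where
  "num_refl n i =
     (if i = 1 \<or> i = n - 1 then n
      else if 2 * i \<le> n then nat \<lceil>real n / real i\<rceil> + 1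
      else nat \<lceil>real n / real (n - i)\<rceil> + 1)"

definition convex_body :: "'a::euclidean_space set \<Rightarrow> bool" where
  "convex_body K \<longleftrightarrow> compact K \<and> convex K \<and> interior K \<noteq> {}"

end

theory Submission
  imports Defs
begin

definition indepZ :: "(nat \<Rightarrow> real) \<Rightarrow> nat \<Rightarrow> bool" where
  "indepZ \<theta> k \<longleftrightarrow> (\<forall>c::nat \<Rightarrow> int. (\<Sum>i\<le>k. of_int (c i) * \<theta> i) = 0 \<longrightarrow> (\<forall>i\<le>k. c i = 0))"

lemma bad_countable:
  fixes \<theta> :: "nat \<Rightarrow> real"
  shows "countable {y::real. \<exists>c::nat\<Rightarrow>int. \<exists>m::int. m \<noteq> 0 \<and> of_int m * y = (\<Sum>i\<le>k. of_int (c i) * \<theta> i)}"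
proof -
  let ?f = "\<lambda>(m::int, cs::int list). (\<Sum>i\<le>k. of_int (cs!i) * \<theta> i) / of_int m"
  have "{y::real. \<exists>c::nat\<Rightarrow>int. \<exists>m::int. m \<noteq> 0 \<and> of_int m * y = (\<Sum>i\<le>k. of_int (c i) * \<theta> i)} \<subseteq> range ?f"
  proof
    fix y assume "y \<in> {y::real. \<exists>c::nat\<Rightarrow>int. \<exists>m::int. m \<noteq> 0 \<and> of_int m * y = (\<Sum>i\<le>k. of_int (c i) * \<theta> i)}"
    then obtain c m where cm: "m \<noteq> 0" "of_int m * y = (\<Sum>i\<le>k. of_int (c i) * \<theta> i)" by blast
    have "(\<Sum>i\<le>k. of_int (map c [0..<Suc k] ! i) * \<theta> i) = (\<Sum>i\<le>k. of_int (c i) * \<theta> i)"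
    proof (rule sum.cong)
      fix i assume "i \<in> {..k}"
      then have "map c [0..<Suc k] ! i = c i"
        by (metis add_0 atMost_iff diff_zero le_imp_less_Suc length_upt nth_map nth_upt)
      then show "of_int (map c [0..<Suc k] ! i) * \<theta> i = of_int (c i) * \<theta> i" by simp
    qed simp
    moreover have "y = (\<Sum>i\<le>k. of_int (c i) * \<theta> i) / of_int m"
      using cm by (simp add: eq_divide_eq mult.commute)
    ultimately have "?f (m, map c [0..<Suc k]) = y" by simp
    then show "y \<in> range ?f" using rangeI[of ?f "(m, map c [0..<Suc k])"] by simp
  qed
  moreover have "countable (range ?f)" by (rule countable_image) simp
  ultimately show ?thesis by (rule countable_subset)
qed

lemma exists_indepZ: "\<exists>\<theta>. \<theta> 0 = 1 \<and> indepZ \<theta> k"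
proof (induction k)
  case 0
  show ?case by (rule exI[of _ "\<lambda>_. 1"]) (simp add: indepZ_def)
next
  case (Suc k)
  then obtain \<theta> where th: "\<theta> 0 = 1" "indepZ \<theta> k" by blast
  let ?B = "{y::real. \<exists>c::nat\<Rightarrow>int. \<exists>m::int. m \<noteq> 0 \<and> of_int m * y = (\<Sum>i\<le>k. of_int (c i) * \<theta> i)}"
  have "?B \<noteq> UNIV" using bad_countable[of \<theta> k] uncountable_UNIV_real by auto
  then obtain y where y: "y \<notin> ?B" by blast
  define \<theta>' where "\<theta>' = \<theta>(Suc k := y)"
  have "indepZ \<theta>' (Suc k)"
    unfolding indepZ_def
  proof (intro allI, rule impI)
    fix c :: "nat \<Rightarrow> int"
    assume s: "(\<Sum>i\<le>Suc k. of_int (c i) * \<theta>' i) = 0"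
    have s2: "(\<Sum>i\<le>k. of_int (c i) * \<theta>' i) = (\<Sum>i\<le>k. of_int (c i) * \<theta> i)"
      by (rule sum.cong) (auto simp: \<theta>'_def)
    have eq: "of_int (c (Suc k)) * y + (\<Sum>i\<le>k. of_int (c i) * \<theta> i) = 0"
      using s s2 by (simp add: \<theta>'_def add.commute)
    have ck: "c (Suc k) = 0"
    proof (rule ccontr)
      assume "c (Suc k) \<noteq> 0"
      moreover have "of_int (c (Suc k)) * y = (\<Sum>i\<le>k. of_int ((\<lambda>i. - c i) i) * \<theta> i)"
        using eq by (simp add: sum_negf eq_neg_iff_add_eq_0)
      ultimately have "y \<in> ?B"
        by (intro CollectI exI[of _ "\<lambda>i. - c i"] exI[of _ "c (Suc k)"]) simp
      with y show False by blast
    qed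
    then have "(\<Sum>i\<le>k. of_int (c i) * \<theta> i) = 0" using eq by simp
    then have "\<forall>i\<le>k. c i = 0" using th(2) unfolding indepZ_def by blast
    then show "\<forall>i\<le>Suc k. c i = 0" using ck by (auto simp: le_Suc_eq)
  qed
  moreover have "\<theta>' 0 = 1" using th by (simp add: \<theta>'_def)
  ultimately show ?case by blast
qed

lemma module_int_real: "module (\<lambda>r x. of_int r * (x::real))"
  by (simp add: Modules.module.intro distrib_left mult.commute distrib_right)

lemma exists_kron_theta:
  "\<exists>\<theta>::nat\<Rightarrow>real. \<theta> d = 1 \<and> inj_on \<theta> {..d} \<and>
      \<not> module.dependent (\<lambda>r x. of_int r * x) (\<theta> ` {..d})"
proof -
  obtain \<phi> where ph: "\<phi> 0 = 1" "indepZ \<phi> d" using exists_indepZ by blast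
  have injph: "inj_on \<phi> {..d}"
  proof (rule inj_onI)
    fix i j assume ij: "i \<in> {..d}" "j \<in> {..d}" "\<phi> i = \<phi> j"
    show "i = j"
    proof (rule ccontr)
      assume ne: "i \<noteq> j"
      define c :: "nat \<Rightarrow> int" where "c = (\<lambda>l. if l = i then 1 else if l = j then -1 else 0)"
      have "(\<Sum>l\<le>d. of_int (c l) * \<phi> l) = (\<Sum>l\<le>d. (if l = i then \<phi> i else 0) - (if l = j then \<phi> j else 0))"
        by (rule sum.cong) (auto simp: c_def ne)
      also have "\<dots> = 0" using ij by (simp add: sum_subtractf)
      finally have "c i = 0" using ph(2) ij unfolding indepZ_def by blast
      then show False by (simp add: c_def)
    qed
  qed
  have indep: "\<not> module.dependent (\<lambda>r x. of_int r * x) (\<phi> ` {..d})"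
  proof
    assume "module.dependent (\<lambda>r x. of_int r * x) (\<phi> ` {..d})"
    then have "\<exists>t u. finite t \<and> t \<subseteq> \<phi> ` {..d} \<and> (\<Sum>v\<in>t. of_int (u v) * v) = 0 \<and> (\<exists>v\<in>t. u v \<noteq> (0::int))"
      by (simp add: module.dependent_explicit[OF module_int_real])
    then obtain t u where tu: "finite t" "t \<subseteq> \<phi> ` {..d}" "(\<Sum>v\<in>t. of_int (u v) * v) = 0"
         "\<exists>v\<in>t. u v \<noteq> 0"
      by blast
    define c where "c = (\<lambda>l. if \<phi> l \<in> t then u (\<phi> l) else 0)"
    define I where "I = {l\<in>{..d}. \<phi> l \<in> t}"
    have tI: "t = \<phi> ` I" using tu(2) by (auto simp: I_def)
    have injI: "inj_on \<phi> I" using injph by (rule inj_on_subset) (auto simp: I_def)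
    have "(\<Sum>l\<le>d. of_int (c l) * \<phi> l) = (\<Sum>l\<le>d. if \<phi> l \<in> t then of_int (u (\<phi> l)) * \<phi> l else 0)"
      by (rule sum.cong) (auto simp: c_def)
    also have "\<dots> = (\<Sum>l\<in>I. of_int (u (\<phi> l)) * \<phi> l)"
      unfolding I_def by (rule sum.inter_filter[symmetric]) simp
    also have "\<dots> = (\<Sum>v\<in>t. of_int (u v) * v)"
      unfolding tI by (simp add: sum.reindex[OF injI])
    also have "\<dots> = 0" by (fact tu(3))
    finally have all0: "\<forall>l\<le>d. c l = 0" using ph(2) unfolding indepZ_def by blast
    from tu(4) obtain v where v: "v \<in> t" "u v \<noteq> 0" by blast
    then obtain l where "l \<le> d" "v = \<phi> l" using tu(2) by auto
    then show False using all0 v by (auto simp: c_def)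
  qed
  define \<theta> where "\<theta> = (\<lambda>i. \<phi> (d - i))"
  have img: "\<theta> ` {..d} = \<phi> ` {..d}"
  proof
    show "\<theta> ` {..d} \<subseteq> \<phi> ` {..d}" by (auto simp: \<theta>_def)
    show "\<phi> ` {..d} \<subseteq> \<theta> ` {..d}"
    proof
      fix v assume "v \<in> \<phi> ` {..d}"
      then obtain i where "i \<le> d" "v = \<phi> i" by auto
      then have "v = \<theta> (d - i)" "d - i \<in> {..d}" by (auto simp: \<theta>_def)
      then show "v \<in> \<theta> ` {..d}" by blast
    qed
  qed
  have "inj_on \<theta> {..d}"
  proof (rule inj_onI)
    fix i j assume "i \<in> {..d}" "j \<in> {..d}" "\<theta> i = \<theta> j"
    then have "d - i = d - j" using injph unfolding \<theta>_def inj_on_def by auto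
    then show "i = j" using \<open>i \<in> {..d}\<close> \<open>j \<in> {..d}\<close> by auto
  qed
  moreover have "\<theta> d = 1" using ph by (simp add: \<theta>_def)
  ultimately show ?thesis using indep img by metis
qed


lemma orth_proj_unique:
  fixes H :: "'a::euclidean_space set"
  assumes "subspace H" "p \<in> H" "\<forall>h\<in>H. (x - p) \<bullet> h = 0"
  shows "orth_proj H x = p"
  unfolding orth_proj_def
proof (rule the_equality)
  show "p \<in> H \<and> (\<forall>h\<in>H. (x - p) \<bullet> h = 0)" using assms by blast
next
  fix q assume q: "q \<in> H \<and> (\<forall>h\<in>H. (x - q) \<bullet> h = 0)"
  have pq: "p - q \<in> H" using assms q by (simp add: subspace_diff)
  have "(p - q) \<bullet> (p - q) = (x - q) \<bullet> (p - q) - (x - p) \<bullet> (p - q)"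
    by (simp add: algebra_simps)
  also have "\<dots> = 0" using pq q assms by simp
  finally show "q = p" by simp
qed

definition ONF :: "(nat \<Rightarrow> 'a::real_inner) \<Rightarrow> nat \<Rightarrow> bool" where
  "ONF f d \<longleftrightarrow> (\<forall>l<d. \<forall>l'<d. f l \<bullet> f l' = (if l = l' then 1 else 0))"

lemma sum_delta_inner:
  fixes f :: "nat \<Rightarrow> 'a::real_inner"
  assumes "ONF f d" "m < d"
  shows "(\<Sum>l<d. c l * (f l \<bullet> f m)) = c m"
proof -
  have "(\<Sum>l<d. c l * (f l \<bullet> f m)) = (\<Sum>l<d. if l = m then c l else 0)"
    by (rule sum.cong) (use assms in \<open>auto simp: ONF_def\<close>)
  also have "\<dots> = c m" using assms(2) by simp
  finally show ?thesis .
qed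

lemma orth_proj_ONF:
  fixes f :: "nat \<Rightarrow> 'a::euclidean_space"
  assumes "ONF f d"
  shows "orth_proj (span (f ` {..<d})) x = (\<Sum>l<d. (x \<bullet> f l) *\<^sub>R f l)"
proof (rule orth_proj_unique)
  show "subspace (span (f ` {..<d}))" by simp
  show "(\<Sum>l<d. (x \<bullet> f l) *\<^sub>R f l) \<in> span (f ` {..<d})"
    by (intro span_sum span_mul span_base) auto
  show "\<forall>h\<in>span (f ` {..<d}). (x - (\<Sum>l<d. (x \<bullet> f l) *\<^sub>R f l)) \<bullet> h = 0"
  proof
    fix h assume h: "h \<in> span (f ` {..<d})"
    have "\<forall>y\<in>f ` {..<d}. orthogonal (x - (\<Sum>l<d. (x \<bullet> f l) *\<^sub>R f l)) y"
    proof
      fix y assume "y \<in> f ` {..<d}"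
      then obtain m where m: "m < d" "y = f m" by auto
      have "(\<Sum>l<d. (x \<bullet> f l) *\<^sub>R f l) \<bullet> f m = (\<Sum>l<d. (x \<bullet> f l) * (f l \<bullet> f m))"
        by (simp add: inner_sum_left)
      also have "\<dots> = x \<bullet> f m" by (rule sum_delta_inner[OF assms m(1)])
      finally show "orthogonal (x - (\<Sum>l<d. (x \<bullet> f l) *\<^sub>R f l)) y"
        using m by (simp add: orthogonal_def inner_diff_left)
    qed
    then have "orthogonal (x - (\<Sum>l<d. (x \<bullet> f l) *\<^sub>R f l)) h"
      using orthogonal_to_span[OF h] by blast
    then show "(x - (\<Sum>l<d. (x \<bullet> f l) *\<^sub>R f l)) \<bullet> h = 0"
      by (simp add: orthogonal_def)
  qed
qed

lemma refl_ONF: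
  fixes f :: "nat \<Rightarrow> 'a::euclidean_space"
  assumes "ONF f d"
  shows "refl_sub (span (f ` {..<d})) x = 2 *\<^sub>R (\<Sum>l<d. (x \<bullet> f l) *\<^sub>R f l) - x"
  by (simp add: refl_sub_def orth_proj_ONF[OF assms])

lemma ONF_independent:
  fixes f :: "nat \<Rightarrow> 'a::euclidean_space"
  assumes "ONF f d"
  shows "inj_on f {..<d}" "independent (f ` {..<d})" "dim (span (f ` {..<d})) = d"
proof -
  show inj: "inj_on f {..<d}"
  proof (rule inj_onI)
    fix l l' assume "l \<in> {..<d}" "l' \<in> {..<d}" "f l = f l'"
    then have "f l \<bullet> f l' = 1" using assms by (auto simp: ONF_def)
    then show "l = l'" using assms \<open>l \<in> {..<d}\<close> \<open>l' \<in> {..<d}\<close>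
      by (auto simp: ONF_def split: if_splits)
  qed
  show ind: "independent (f ` {..<d})"
  proof (rule pairwise_orthogonal_independent)
    show "pairwise orthogonal (f ` {..<d})"
      using assms by (auto simp: pairwise_def ONF_def orthogonal_def)
    show "0 \<notin> f ` {..<d}"
    proof
      assume "0 \<in> f ` {..<d}"
      then obtain l where "l < d" "f l = 0" by auto
      have "f l \<bullet> f l = 1" using assms \<open>l < d\<close> unfolding ONF_def by simp
      then show False using \<open>f l = 0\<close> by simp
    qed
  qed
  show "dim (span (f ` {..<d})) = d"
    using dim_span_eq_card_independent[OF ind] card_image[OF inj] by simp
qed


definition ONF2 :: "(nat \<Rightarrow> 'a::real_inner) \<Rightarrow> (nat \<Rightarrow> 'a) \<Rightarrow> nat \<Rightarrow> bool" where
  "ONF2 a b d \<longleftrightarrow> ONF a d \<and> ONF b d \<and> (\<forall>l<d. \<forall>l'<d. a l \<bullet> b l' = 0)"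

definition mrot :: "(nat \<Rightarrow> 'a::real_inner) \<Rightarrow> (nat \<Rightarrow> 'a) \<Rightarrow> nat \<Rightarrow> (nat \<Rightarrow> real) \<Rightarrow> 'a \<Rightarrow> 'a" where
  "mrot a b d t x = x + (\<Sum>l<d. ((cos (t l) - 1) * (x \<bullet> a l) - sin (t l) * (x \<bullet> b l)) *\<^sub>R a l
                              + (sin (t l) * (x \<bullet> a l) + (cos (t l) - 1) * (x \<bullet> b l)) *\<^sub>R b l)"

lemma ONF2_facts:
  assumes "ONF2 a b d" "l < d" "l' < d"
  shows "a l \<bullet> a l' = (if l = l' then 1 else 0)" "b l \<bullet> b l' = (if l = l' then 1 else 0)"
    "a l \<bullet> b l' = 0" "b l \<bullet> a l' = 0"
  using assms by (auto simp: ONF2_def ONF_def inner_commute)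

lemma mrot_a:
  assumes "ONF2 a b d" "m < d"
  shows "mrot a b d t x \<bullet> a m = cos (t m) * (x \<bullet> a m) - sin (t m) * (x \<bullet> b m)"
proof -
  have "(\<Sum>l<d. ((cos (t l) - 1) * (x \<bullet> a l) - sin (t l) * (x \<bullet> b l)) *\<^sub>R a l
                              + (sin (t l) * (x \<bullet> a l) + (cos (t l) - 1) * (x \<bullet> b l)) *\<^sub>R b l) \<bullet> a m
     = (\<Sum>l<d. if l = m then (cos (t l) - 1) * (x \<bullet> a l) - sin (t l) * (x \<bullet> b l) else 0)"
    unfolding inner_sum_left
    by (rule sum.cong) (use assms in \<open>auto simp: inner_add_left ONF2_facts\<close>)
  also have "\<dots> = (cos (t m) - 1) * (x \<bullet> a m) - sin (t m) * (x \<bullet> b m)" using assms by simp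
  finally show ?thesis unfolding mrot_def inner_add_left by (simp add: algebra_simps)
qed

lemma mrot_b:
  assumes "ONF2 a b d" "m < d"
  shows "mrot a b d t x \<bullet> b m = sin (t m) * (x \<bullet> a m) + cos (t m) * (x \<bullet> b m)"
proof -
  have "(\<Sum>l<d. ((cos (t l) - 1) * (x \<bullet> a l) - sin (t l) * (x \<bullet> b l)) *\<^sub>R a l
                              + (sin (t l) * (x \<bullet> a l) + (cos (t l) - 1) * (x \<bullet> b l)) *\<^sub>R b l) \<bullet> b m
     = (\<Sum>l<d. if l = m then sin (t l) * (x \<bullet> a l) + (cos (t l) - 1) * (x \<bullet> b l) else 0)"
    unfolding inner_sum_left
    by (rule sum.cong) (use assms in \<open>auto simp: inner_add_left ONF2_facts\<close>)
  also have "\<dots> = sin (t m) * (x \<bullet> a m) + (cos (t m) - 1) * (x \<bullet> b m)" using assms by simp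
  finally show ?thesis unfolding mrot_def inner_add_left by (simp add: algebra_simps)
qed

lemma mrot_other:
  assumes "\<forall>l<d. a l \<bullet> c = 0 \<and> b l \<bullet> c = 0"
  shows "mrot a b d t x \<bullet> c = x \<bullet> c"
  unfolding mrot_def inner_add_left inner_sum_left using assms by simp

lemma mrot_comp:
  assumes "ONF2 a b d"
  shows "mrot a b d t (mrot a b d s x) = mrot a b d (\<lambda>l. t l + s l) x"
proof -
  let ?y = "mrot a b d s x"
  define P where "P = (\<lambda>l. ((cos (s l) - 1) * (x \<bullet> a l) - sin (s l) * (x \<bullet> b l)) *\<^sub>R a l
                              + (sin (s l) * (x \<bullet> a l) + (cos (s l) - 1) * (x \<bullet> b l)) *\<^sub>R b l)"
  define Q where "Q = (\<lambda>l. ((cos (t l) - 1) * (cos (s l) * (x \<bullet> a l) - sin (s l) * (x \<bullet> b l)) - sin (t l) * (sin (s l) * (x \<bullet> a l) + cos (s l) * (x \<bullet> b l))) *\<^sub>R a l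
    + (sin (t l) * (cos (s l) * (x \<bullet> a l) - sin (s l) * (x \<bullet> b l)) + (cos (t l) - 1) * (sin (s l) * (x \<bullet> a l) + cos (s l) * (x \<bullet> b l))) *\<^sub>R b l)"
  define R where "R = (\<lambda>l. ((cos (t l + s l) - 1) * (x \<bullet> a l) - sin (t l + s l) * (x \<bullet> b l)) *\<^sub>R a l
                              + (sin (t l + s l) * (x \<bullet> a l) + (cos (t l + s l) - 1) * (x \<bullet> b l)) *\<^sub>R b l)"
  have trm: "P l + Q l = R l" for l
  proof -
    have e1: "(cos (s l) - 1) * (x \<bullet> a l) - sin (s l) * (x \<bullet> b l) +
        ((cos (t l) - 1) * (cos (s l) * (x \<bullet> a l) - sin (s l) * (x \<bullet> b l)) - sin (t l) * (sin (s l) * (x \<bullet> a l) + cos (s l) * (x \<bullet> b l)))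
        = (cos (t l + s l) - 1) * (x \<bullet> a l) - sin (t l + s l) * (x \<bullet> b l)"
      by (simp add: cos_add sin_add algebra_simps)
    have e2: "sin (s l) * (x \<bullet> a l) + (cos (s l) - 1) * (x \<bullet> b l) +
        (sin (t l) * (cos (s l) * (x \<bullet> a l) - sin (s l) * (x \<bullet> b l)) + (cos (t l) - 1) * (sin (s l) * (x \<bullet> a l) + cos (s l) * (x \<bullet> b l)))
        = sin (t l + s l) * (x \<bullet> a l) + (cos (t l + s l) - 1) * (x \<bullet> b l)"
      by (simp add: cos_add sin_add algebra_simps)
    show ?thesis unfolding P_def Q_def R_def
      by (simp only: e1[symmetric] e2[symmetric] scaleR_add_left) (simp add: algebra_simps)
  qed
  have "mrot a b d t ?y = ?y + (\<Sum>l<d. Q l)"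
    unfolding mrot_def[of a b d t ?y] Q_def
    by (intro arg_cong2[where f="(+)"] refl sum.cong) (simp_all add: mrot_a[OF assms] mrot_b[OF assms])
  also have "\<dots> = x + ((\<Sum>l<d. P l) + (\<Sum>l<d. Q l))"
    by (simp add: mrot_def P_def add.assoc)
  also have "\<dots> = x + (\<Sum>l<d. P l + Q l)" by (simp add: sum.distrib)
  also have "\<dots> = x + (\<Sum>l<d. R l)" using trm by simp
  also have "\<dots> = mrot a b d (\<lambda>l. t l + s l) x" by (simp add: mrot_def R_def)
  finally show ?thesis .
qed

lemma mrot_zero: "mrot a b d (\<lambda>l. 0) x = x"
  by (simp add: mrot_def)

lemma mrot_inv:
  assumes "ONF2 a b d"
  shows "mrot a b d (\<lambda>l. - t l) (mrot a b d t x) = x"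
  by (simp add: mrot_comp[OF assms] mrot_zero)


lemma ONF_twist:
  assumes "ONF2 a b d"
  shows "ONF (\<lambda>l. cos (\<alpha> l) *\<^sub>R a l + sin (\<alpha> l) *\<^sub>R b l) d"
  unfolding ONF_def
proof (intro allI impI)
  fix l l' assume "l < d" "l' < d"
  then show "(cos (\<alpha> l) *\<^sub>R a l + sin (\<alpha> l) *\<^sub>R b l) \<bullet> (cos (\<alpha> l') *\<^sub>R a l' + sin (\<alpha> l') *\<^sub>R b l') =
        (if l = l' then 1 else 0)"
    using assms by (auto simp: inner_add_left inner_add_right ONF2_facts power2_eq_square[symmetric])
qed

lemma lin2:
  fixes a b :: "'a::real_vector"
  shows "p *\<^sub>R a - q *\<^sub>R (c *\<^sub>R a + s *\<^sub>R b) = (p - q * c) *\<^sub>R a + (- (q * s)) *\<^sub>R b"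
  by (simp add: scaleR_add_right scaleR_diff_left scaleR_scaleR algebra_simps)

lemma refl_comp:
  fixes a b :: "nat \<Rightarrow> 'a::euclidean_space"
  assumes "ONF2 a b d"
  shows "refl_sub (span (a ` {..<d})) (refl_sub (span ((\<lambda>l. cos (\<alpha> l) *\<^sub>R a l + sin (\<alpha> l) *\<^sub>R b l) ` {..<d})) x)
     = mrot a b d (\<lambda>l. - (2 * \<alpha> l)) x"
proof -
  define f where "f = (\<lambda>l. cos (\<alpha> l) *\<^sub>R a l + sin (\<alpha> l) *\<^sub>R b l)"
  have onf: "ONF f d" unfolding f_def by (rule ONF_twist[OF assms])
  have ona: "ONF a d" using assms by (simp add: ONF2_def)
  define y where "y = 2 *\<^sub>R (\<Sum>l<d. (x \<bullet> f l) *\<^sub>R f l) - x"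
  have Ry: "refl_sub (span (f ` {..<d})) x = y" unfolding y_def by (rule refl_ONF[OF onf])
  have fa: "f l \<bullet> a m = (if l = m then cos (\<alpha> l) else 0)" if "l < d" "m < d" for l m
    using assms that by (auto simp: f_def inner_add_left ONF2_facts)
  have ya: "y \<bullet> a m = 2 * (x \<bullet> f m) * cos (\<alpha> m) - x \<bullet> a m" if "m < d" for m
  proof -
    have "(\<Sum>l<d. (x \<bullet> f l) *\<^sub>R f l) \<bullet> a m = (\<Sum>l<d. if l = m then (x \<bullet> f l) * cos (\<alpha> l) else 0)"
      unfolding inner_sum_left by (rule sum.cong) (use that fa in auto)
    also have "\<dots> = (x \<bullet> f m) * cos (\<alpha> m)" using that by simp
    finally show ?thesis unfolding y_def by (simp add: inner_diff_left)
  qed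
  have xf: "x \<bullet> f l = cos (\<alpha> l) * (x \<bullet> a l) + sin (\<alpha> l) * (x \<bullet> b l)" for l
    by (simp add: f_def inner_add_right)
  define R where "R = (\<lambda>l. ((cos (- (2 * \<alpha> l)) - 1) * (x \<bullet> a l) - sin (- (2 * \<alpha> l)) * (x \<bullet> b l)) *\<^sub>R a l
                              + (sin (- (2 * \<alpha> l)) * (x \<bullet> a l) + (cos (- (2 * \<alpha> l)) - 1) * (x \<bullet> b l)) *\<^sub>R b l)"
  have trm: "(2 * (2 * (x \<bullet> f l) * cos (\<alpha> l) - x \<bullet> a l)) *\<^sub>R a l - (2 * (x \<bullet> f l)) *\<^sub>R f l = R l" for l
  proof -
    have e1: "2 * (2 * (x \<bullet> f l) * cos (\<alpha> l) - x \<bullet> a l) - 2 * (x \<bullet> f l) * cos (\<alpha> l)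
        = (cos (- (2 * \<alpha> l)) - 1) * (x \<bullet> a l) - sin (- (2 * \<alpha> l)) * (x \<bullet> b l)"
      unfolding xf cos_minus sin_minus cos_double_cos sin_double by (simp add: algebra_simps power2_eq_square)
    have e2: "- (2 * (x \<bullet> f l) * sin (\<alpha> l))
        = sin (- (2 * \<alpha> l)) * (x \<bullet> a l) + (cos (- (2 * \<alpha> l)) - 1) * (x \<bullet> b l)"
      unfolding xf cos_minus sin_minus cos_double_sin sin_double by (simp add: algebra_simps power2_eq_square)
    have gen: "(2 * (2 * K * cos (\<alpha> l) - x \<bullet> a l)) *\<^sub>R a l - (2 * K) *\<^sub>R f l
        = (2 * (2 * K * cos (\<alpha> l) - x \<bullet> a l) - 2 * K * cos (\<alpha> l)) *\<^sub>R a l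
          + (- (2 * K * sin (\<alpha> l))) *\<^sub>R b l" for K
      unfolding f_def by (rule lin2)
    have "(2 * (2 * (x \<bullet> f l) * cos (\<alpha> l) - x \<bullet> a l)) *\<^sub>R a l - (2 * (x \<bullet> f l)) *\<^sub>R f l
        = (2 * (2 * (x \<bullet> f l) * cos (\<alpha> l) - x \<bullet> a l) - 2 * (x \<bullet> f l) * cos (\<alpha> l)) *\<^sub>R a l
          + (- (2 * (x \<bullet> f l) * sin (\<alpha> l))) *\<^sub>R b l"
      by (rule gen)
    also have "\<dots> = R l" unfolding e1 e2 R_def ..
    finally show ?thesis .
  qed
  have "refl_sub (span (a ` {..<d})) y = 2 *\<^sub>R (\<Sum>m<d. (y \<bullet> a m) *\<^sub>R a m) - y"
    by (rule refl_ONF[OF ona])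
  also have "\<dots> = 2 *\<^sub>R (\<Sum>m<d. (2 * (x \<bullet> f m) * cos (\<alpha> m) - x \<bullet> a m) *\<^sub>R a m) - y"
    using ya by simp
  also have "\<dots> = x + ((\<Sum>m<d. (2 * (2 * (x \<bullet> f m) * cos (\<alpha> m) - x \<bullet> a m)) *\<^sub>R a m)
                     - (\<Sum>l<d. (2 * (x \<bullet> f l)) *\<^sub>R f l))"
    unfolding y_def by (simp add: scaleR_sum_right algebra_simps)
  also have "\<dots> = x + (\<Sum>l<d. R l)"
    using trm by (simp add: sum_subtractf[symmetric])
  also have "\<dots> = mrot a b d (\<lambda>l. - (2 * \<alpha> l)) x" by (simp add: mrot_def R_def)
  finally show ?thesis using Ry f_def by simp
qed


definition rot :: "'a::real_inner \<Rightarrow> 'a \<Rightarrow> real \<Rightarrow> 'a \<Rightarrow> 'a" where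
  "rot u v t x = x + ((cos t - 1) * (x \<bullet> u) - sin t * (x \<bullet> v)) *\<^sub>R u + (sin t * (x \<bullet> u) + (cos t - 1) * (x \<bullet> v)) *\<^sub>R v"

lemma mrot_single:
  assumes "l0 < d"
  shows "mrot a b d (\<lambda>l. if l = l0 then t else 0) x = rot (a l0) (b l0) t x"
proof -
  have "(\<Sum>l<d. ((cos (if l = l0 then t else 0) - 1) * (x \<bullet> a l) - sin (if l = l0 then t else 0) * (x \<bullet> b l)) *\<^sub>R a l
          + (sin (if l = l0 then t else 0) * (x \<bullet> a l) + (cos (if l = l0 then t else 0) - 1) * (x \<bullet> b l)) *\<^sub>R b l)
      = (\<Sum>l<d. if l = l0 then ((cos t - 1) * (x \<bullet> a l) - sin t * (x \<bullet> b l)) *\<^sub>R a l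
          + (sin t * (x \<bullet> a l) + (cos t - 1) * (x \<bullet> b l)) *\<^sub>R b l else 0)"
    by (rule sum.cong) auto
  also have "\<dots> = ((cos t - 1) * (x \<bullet> a l0) - sin t * (x \<bullet> b l0)) *\<^sub>R a l0
          + (sin t * (x \<bullet> a l0) + (cos t - 1) * (x \<bullet> b l0)) *\<^sub>R b l0" using assms by simp
  finally show ?thesis unfolding mrot_def rot_def by (simp add: add.assoc)
qed

lemma cos_lip: "\<bar>cos (u::real) - cos v\<bar> \<le> \<bar>u - v\<bar>"
proof -
  have "\<bar>cos u - cos v\<bar> = 2 * \<bar>sin ((u + v) / 2)\<bar> * \<bar>sin ((v - u) / 2)\<bar>"
    by (simp add: cos_diff_cos abs_mult)
  also have "\<dots> \<le> 2 * 1 * \<bar>(v - u) / 2\<bar>"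
    by (intro mult_mono abs_sin_x_le_abs_x) auto
  finally show ?thesis by simp
qed

lemma sin_lip: "\<bar>sin (u::real) - sin v\<bar> \<le> \<bar>u - v\<bar>"
proof -
  have "\<bar>sin u - sin v\<bar> = 2 * \<bar>sin ((u - v) / 2)\<bar> * \<bar>cos ((u + v) / 2)\<bar>"
    by (simp add: sin_diff_sin abs_mult)
  also have "\<dots> \<le> 2 * \<bar>(u - v) / 2\<bar> * 1"
    by (intro mult_mono abs_sin_x_le_abs_x) auto
  finally show ?thesis by simp
qed

lemma inner_le_norm:
  assumes "a \<bullet> a = 1"
  shows "\<bar>x \<bullet> a\<bar> \<le> norm x"
proof -
  have "norm a = 1" using assms by (simp add: norm_eq_sqrt_inner)
  then show ?thesis using Cauchy_Schwarz_ineq2[of x a] by simp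
qed

lemma mrot_bound:
  assumes "ONF2 a b d" and dl: "\<forall>l<d. \<bar>cos (t l) - cos (s l)\<bar> \<le> \<delta> \<and> \<bar>sin (t l) - sin (s l)\<bar> \<le> \<delta>"
  shows "norm (mrot a b d t x - mrot a b d s x) \<le> 4 * real d * \<delta> * norm x"
proof -
  have eq: "mrot a b d t x - mrot a b d s x = (\<Sum>l<d. ((cos (t l) - cos (s l)) * (x \<bullet> a l) - (sin (t l) - sin (s l)) * (x \<bullet> b l)) *\<^sub>R a l
          + ((sin (t l) - sin (s l)) * (x \<bullet> a l) + (cos (t l) - cos (s l)) * (x \<bullet> b l)) *\<^sub>R b l)"
    unfolding mrot_def by (simp add: sum_subtractf[symmetric] algebra_simps)
  have tb: "norm (((cos (t l) - cos (s l)) * (x \<bullet> a l) - (sin (t l) - sin (s l)) * (x \<bullet> b l)) *\<^sub>R a l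
          + ((sin (t l) - sin (s l)) * (x \<bullet> a l) + (cos (t l) - cos (s l)) * (x \<bullet> b l)) *\<^sub>R b l) \<le> 4 * \<delta> * norm x"
    if l: "l < d" for l
  proof -
    have aa: "a l \<bullet> a l = 1" and bb: "b l \<bullet> b l = 1" using assms(1) l by (auto simp: ONF2_facts)
    then have na: "norm (a l) = 1" and nb: "norm (b l) = 1" by (auto simp: norm_eq_sqrt_inner)
    have xa: "\<bar>x \<bullet> a l\<bar> \<le> norm x" and xb: "\<bar>x \<bullet> b l\<bar> \<le> norm x" using aa bb by (auto intro: inner_le_norm)
    have c: "\<bar>cos (t l) - cos (s l)\<bar> \<le> \<delta>" and s: "\<bar>sin (t l) - sin (s l)\<bar> \<le> \<delta>" using dl l by auto
    have d0: "0 \<le> \<delta>" using c by linarith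
    have "\<bar>(cos (t l) - cos (s l)) * (x \<bullet> a l)\<bar> \<le> \<delta> * norm x"
      unfolding abs_mult by (intro mult_mono c xa) (auto simp: d0)
    moreover have "\<bar>(sin (t l) - sin (s l)) * (x \<bullet> b l)\<bar> \<le> \<delta> * norm x"
      unfolding abs_mult by (intro mult_mono s xb) (auto simp: d0)
    moreover have "\<bar>(sin (t l) - sin (s l)) * (x \<bullet> a l)\<bar> \<le> \<delta> * norm x"
      unfolding abs_mult by (intro mult_mono s xa) (auto simp: d0)
    moreover have "\<bar>(cos (t l) - cos (s l)) * (x \<bullet> b l)\<bar> \<le> \<delta> * norm x"
      unfolding abs_mult by (intro mult_mono c xb) (auto simp: d0)
    moreover have "norm (p *\<^sub>R a l + q *\<^sub>R b l) \<le> \<bar>p\<bar> + \<bar>q\<bar>" for p q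
      using norm_triangle_ineq[of "p *\<^sub>R a l" "q *\<^sub>R b l"] na nb by simp
    ultimately have h1: "\<bar>(cos (t l) - cos (s l)) * (x \<bullet> a l)\<bar> \<le> \<delta> * norm x"
      and h2: "\<bar>(sin (t l) - sin (s l)) * (x \<bullet> b l)\<bar> \<le> \<delta> * norm x"
      and h3: "\<bar>(sin (t l) - sin (s l)) * (x \<bullet> a l)\<bar> \<le> \<delta> * norm x"
      and h4: "\<bar>(cos (t l) - cos (s l)) * (x \<bullet> b l)\<bar> \<le> \<delta> * norm x"
      and h5: "\<And>p q. norm (p *\<^sub>R a l + q *\<^sub>R b l) \<le> \<bar>p\<bar> + \<bar>q\<bar>" by blast+
    have P: "\<bar>(cos (t l) - cos (s l)) * (x \<bullet> a l) - (sin (t l) - sin (s l)) * (x \<bullet> b l)\<bar> \<le> 2 * \<delta> * norm x"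
      using abs_triangle_ineq4[of "(cos (t l) - cos (s l)) * (x \<bullet> a l)" "(sin (t l) - sin (s l)) * (x \<bullet> b l)"] h1 h2
      by linarith
    have Q: "\<bar>(sin (t l) - sin (s l)) * (x \<bullet> a l) + (cos (t l) - cos (s l)) * (x \<bullet> b l)\<bar> \<le> 2 * \<delta> * norm x"
      using abs_triangle_ineq[of "(sin (t l) - sin (s l)) * (x \<bullet> a l)" "(cos (t l) - cos (s l)) * (x \<bullet> b l)"] h3 h4
      by linarith
    show ?thesis using h5[of "(cos (t l) - cos (s l)) * (x \<bullet> a l) - (sin (t l) - sin (s l)) * (x \<bullet> b l)"
        "(sin (t l) - sin (s l)) * (x \<bullet> a l) + (cos (t l) - cos (s l)) * (x \<bullet> b l)"] P Q
      by linarith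
  qed
  have "norm (mrot a b d t x - mrot a b d s x) \<le> (\<Sum>l<d. 4 * \<delta> * norm x)"
    unfolding eq by (rule order_trans[OF norm_sum sum_mono]) (use tb in auto)
  also have "\<dots> = 4 * real d * \<delta> * norm x" by simp
  finally show ?thesis .
qed

lemma cos_shift_int: "cos (y - 2 * pi * of_int m) = cos y"
  by (simp add: cos_diff)

lemma sin_shift_int: "sin (y - 2 * pi * of_int m) = sin y"
  by (simp add: sin_diff)

lemma mrot_all:
  fixes E :: "'a::euclidean_space set"
  assumes onf: "ONF2 a b d" and cl: "closed E"
    and gen: "mrot a b d (\<lambda>l. 2 * pi * \<theta> l) ` E = E"
    and th: "\<theta> d = 1" "inj_on \<theta> {..d}" "\<not> module.dependent (\<lambda>r x. of_int r * x) (\<theta> ` {..d})"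
  shows "mrot a b d \<beta> ` E \<subseteq> E"
proof -
  define \<gamma> where "\<gamma> = (\<lambda>l. 2 * pi * \<theta> l)"
  have inv: "mrot a b d (\<lambda>l. - \<gamma> l) ` E \<subseteq> E"
  proof
    fix y assume "y \<in> mrot a b d (\<lambda>l. - \<gamma> l) ` E"
    then obtain z where z: "z \<in> E" "y = mrot a b d (\<lambda>l. - \<gamma> l) z" by auto
    from z(1) gen obtain w where w: "w \<in> E" "z = mrot a b d \<gamma> w" unfolding \<gamma>_def by blast
    have "y = w" using z(2) w(2) mrot_inv[OF onf] by simp
    then show "y \<in> E" using w by simp
  qed
  have fwd: "mrot a b d \<gamma> ` E \<subseteq> E" using gen unfolding \<gamma>_def by simp
  have pow: "mrot a b d (\<lambda>l. real n * (\<sigma> * \<gamma> l)) ` E \<subseteq> E"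
    if \<sigma>: "mrot a b d (\<lambda>l. \<sigma> * \<gamma> l) ` E \<subseteq> E" for n \<sigma>
  proof (induction n)
    case 0
    then show ?case by (simp add: mrot_zero[unfolded])
  next
    case (Suc n)
    have eq: "mrot a b d (\<lambda>l. real (Suc n) * (\<sigma> * \<gamma> l)) x
        = mrot a b d (\<lambda>l. \<sigma> * \<gamma> l) (mrot a b d (\<lambda>l. real n * (\<sigma> * \<gamma> l)) x)" for x
      by (simp add: mrot_comp[OF onf] algebra_simps)
    show ?case
    proof
      fix y assume "y \<in> mrot a b d (\<lambda>l. real (Suc n) * (\<sigma> * \<gamma> l)) ` E"
      then obtain x where "x \<in> E" "y = mrot a b d (\<lambda>l. real (Suc n) * (\<sigma> * \<gamma> l)) x" by auto
      then show "y \<in> E" using eq Suc \<sigma> by blast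
    qed
  qed
  have intpow: "mrot a b d (\<lambda>l. of_int k * \<gamma> l) ` E \<subseteq> E" for k :: int
  proof (cases "k \<ge> 0")
    case True
    then obtain n where "k = int n" by (metis nonneg_eq_int)
    then show ?thesis using pow[of 1 n] fwd by simp
  next
    case False
    then have "k = - int (nat (- k))" by simp
    then obtain n where "k = - int n" by blast
    then show ?thesis using pow[of "-1" n] inv by simp
  qed
  show ?thesis
  proof
    fix y assume "y \<in> mrot a b d \<beta> ` E"
    then obtain x where x: "x \<in> E" "y = mrot a b d \<beta> x" by auto
    have "\<forall>\<epsilon>>0. \<exists>z\<in>E. dist z y < \<epsilon>"
    proof (intro allI impI)
      fix \<epsilon> :: real assume "\<epsilon> > 0"
      define D where "D = (real d + 1) * (norm x + 1)"
      define \<epsilon>' where "\<epsilon>' = \<epsilon> / (8 * pi * D)"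
      have n1: "0 < norm x + 1" using norm_ge_zero[of x] by linarith
      have n2: "0 < real d + 1" by simp
      have Dpos: "D > 0" unfolding D_def using n1 n2 by simp
      have den: "8 * pi * D > 0"
        using Dpos pi_gt_zero by simp
      have \<epsilon>'pos: "\<epsilon>' > 0" unfolding \<epsilon>'_def using \<open>\<epsilon> > 0\<close> den by (rule divide_pos_pos)
      obtain k m where km: "\<And>i. i < d \<Longrightarrow> \<bar>real_of_int k * \<theta> i - real_of_int (m i) - \<beta> i / (2 * pi)\<bar> < \<epsilon>'"
        using Kronecker_thm_2[OF th(3) th(2) th(1) \<epsilon>'pos, of "\<lambda>i. \<beta> i / (2 * pi)"] by blast
      define \<delta> where "\<delta> = 2 * pi * \<epsilon>'"
      have close: "\<bar>of_int k * \<gamma> i - 2 * pi * of_int (m i) - \<beta> i\<bar> \<le> \<delta>" if "i < d" for i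
      proof -
        have "of_int k * \<gamma> i - 2 * pi * of_int (m i) - \<beta> i
            = 2 * pi * (real_of_int k * \<theta> i - real_of_int (m i) - \<beta> i / (2 * pi))"
          unfolding \<gamma>_def by (simp add: field_simps)
        then have "\<bar>of_int k * \<gamma> i - 2 * pi * of_int (m i) - \<beta> i\<bar>
            = 2 * pi * \<bar>real_of_int k * \<theta> i - real_of_int (m i) - \<beta> i / (2 * pi)\<bar>"
          by (simp add: abs_mult)
        also have "\<dots> \<le> 2 * pi * \<epsilon>'" using km[OF that] by (intro mult_left_mono) auto
        finally show ?thesis unfolding \<delta>_def .
      qed
      have cs: "\<forall>l<d. \<bar>cos (of_int k * \<gamma> l) - cos (\<beta> l)\<bar> \<le> \<delta> \<and> \<bar>sin (of_int k * \<gamma> l) - sin (\<beta> l)\<bar> \<le> \<delta>"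
      proof (intro allI impI conjI)
        fix l assume "l < d"
        show "\<bar>cos (of_int k * \<gamma> l) - cos (\<beta> l)\<bar> \<le> \<delta>"
          using cos_lip[of "of_int k * \<gamma> l - 2 * pi * of_int (m l)" "\<beta> l"] close[OF \<open>l < d\<close>]
          unfolding cos_shift_int by linarith
        show "\<bar>sin (of_int k * \<gamma> l) - sin (\<beta> l)\<bar> \<le> \<delta>"
          using sin_lip[of "of_int k * \<gamma> l - 2 * pi * of_int (m l)" "\<beta> l"] close[OF \<open>l < d\<close>]
          unfolding sin_shift_int by linarith
      qed
      define z where "z = mrot a b d (\<lambda>l. of_int k * \<gamma> l) x"
      have "z \<in> E" using intpow[of k] x(1) unfolding z_def by blast
      moreover have "dist z y < \<epsilon>"
      proof -
        have "dist z y \<le> 4 * real d * \<delta> * norm x"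
          unfolding dist_norm z_def x(2) by (rule mrot_bound[OF onf cs])
        also have "\<dots> = \<epsilon> * (real d * norm x) / D"
          unfolding \<delta>_def \<epsilon>'_def using Dpos pi_gt_zero by (simp add: field_simps)
        also have "\<dots> < \<epsilon>"
        proof -
          have "real d * norm x < (real d + 1) * (norm x + 1)"
            by (simp add: algebra_simps add_pos_nonneg)
          then have "(real d * norm x) / D < 1"
            using Dpos unfolding D_def by (simp add: divide_less_eq)
          then show ?thesis using \<open>\<epsilon> > 0\<close>
            by (metis mult.right_neutral mult_strict_left_mono times_divide_eq_right)
        qed
        finally show ?thesis .
      qed
      ultimately show "\<exists>z\<in>E. dist z y < \<epsilon>" by blast
    qed
    then show "y \<in> E" using closed_approachable[OF cl] by blast
  qed
qed


lemma e_orth: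
  fixes e :: "nat \<Rightarrow> 'a::euclidean_space"
  assumes "bij_betw e {..<n} Basis" "u < n" "v < n"
  shows "e u \<bullet> e v = (if u = v then 1 else 0)"
proof -
  have "e u \<in> Basis" "e v \<in> Basis" using assms by (auto simp: bij_betw_def)
  moreover have "e u = e v \<longleftrightarrow> u = v" using assms by (auto simp: bij_betw_def inj_on_def)
  ultimately show ?thesis by (auto simp: inner_Basis)
qed

lemma eq_by_coords:
  fixes e :: "nat \<Rightarrow> 'a::euclidean_space"
  assumes "bij_betw e {..<n} Basis" "\<forall>m<n. x \<bullet> e m = y \<bullet> e m"
  shows "x = y"
proof (rule euclidean_eqI)
  fix b :: 'a assume "b \<in> Basis"
  then obtain m where "m < n" "b = e m" using assms(1) by (auto simp: bij_betw_def)
  then show "x \<bullet> b = y \<bullet> b" using assms(2) by simp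
qed

lemma rot_a: "a \<bullet> a = 1 \<Longrightarrow> a \<bullet> b = 0 \<Longrightarrow> rot a b t x \<bullet> a = cos t * (x \<bullet> a) - sin t * (x \<bullet> b)"
  by (simp add: rot_def inner_add_left inner_commute algebra_simps)

lemma rot_b: "b \<bullet> b = 1 \<Longrightarrow> a \<bullet> b = 0 \<Longrightarrow> rot a b t x \<bullet> b = sin t * (x \<bullet> a) + cos t * (x \<bullet> b)"
  by (simp add: rot_def inner_add_left inner_commute algebra_simps)

lemma rot_other: "a \<bullet> c = 0 \<Longrightarrow> b \<bullet> c = 0 \<Longrightarrow> rot a b t x \<bullet> c = x \<bullet> c"
  by (simp add: rot_def inner_add_left)

lemma rot_as_mrot: "rot a b t x = mrot (\<lambda>_. a) (\<lambda>_. b) 1 (\<lambda>_. t) x"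
  by (simp add: rot_def mrot_def add.assoc)

lemma ONF2_pair: "a \<bullet> a = 1 \<Longrightarrow> b \<bullet> b = 1 \<Longrightarrow> a \<bullet> b = 0 \<Longrightarrow> ONF2 (\<lambda>_. a) (\<lambda>_. b) 1"
  by (simp add: ONF2_def ONF_def)

lemma rot_inv: "a \<bullet> a = 1 \<Longrightarrow> b \<bullet> b = 1 \<Longrightarrow> a \<bullet> b = 0 \<Longrightarrow> rot a b (- t) (rot a b t x) = x"
  unfolding rot_as_mrot using mrot_inv[OF ONF2_pair, of a b "\<lambda>_. t" x] by simp

lemma rot_swap: "rot b a t x = rot a b (- t) x"
  by (simp add: rot_def algebra_simps)

lemma rot_norm:
  assumes "a \<bullet> a = 1" "b \<bullet> b = 1" "a \<bullet> b = 0"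
  shows "norm (rot a b t x) = norm x"
proof -
  define P where "P = (cos t - 1) * (x \<bullet> a) - sin t * (x \<bullet> b)"
  define Q where "Q = sin t * (x \<bullet> a) + (cos t - 1) * (x \<bullet> b)"
  have r: "rot a b t x = x + P *\<^sub>R a + Q *\<^sub>R b" unfolding rot_def P_def Q_def by simp
  have h1: "(x + P *\<^sub>R a + Q *\<^sub>R b) \<bullet> (x + P *\<^sub>R a + Q *\<^sub>R b)
      = x \<bullet> x + (2 * P * (x \<bullet> a) + 2 * Q * (x \<bullet> b) + P * P + Q * Q)"
    using assms by (simp add: inner_add_left inner_add_right inner_commute algebra_simps)
  have h2: "2 * P * (x \<bullet> a) + 2 * Q * (x \<bullet> b) + P * P + Q * Q
      = ((cos t)\<^sup>2 + (sin t)\<^sup>2 - 1) * ((x \<bullet> a)\<^sup>2 + (x \<bullet> b)\<^sup>2)"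
    unfolding P_def Q_def power2_eq_square by algebra
  have h3: "((cos t)\<^sup>2 + (sin t)\<^sup>2 - 1) * ((x \<bullet> a)\<^sup>2 + (x \<bullet> b)\<^sup>2) = 0"
  proof -
    have cs: "(cos t)\<^sup>2 + (sin t)\<^sup>2 - 1 = 0" using sin_cos_squared_add[of t] by linarith
    show ?thesis by (simp only: cs mult_zero_left)
  qed
  have "rot a b t x \<bullet> rot a b t x = x \<bullet> x" using r h1 h2 h3 by simp
  then show ?thesis by (simp add: norm_eq_sqrt_inner)
qed

definition Vset :: "(nat \<Rightarrow> 'a::real_inner) \<Rightarrow> nat \<Rightarrow> nat set \<Rightarrow> 'a set" where
  "Vset e n S = {x. norm x = 1 \<and> (\<forall>m<n. m \<notin> S \<longrightarrow> x \<bullet> e m = 0)}"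

definition Pset :: "(nat \<Rightarrow> 'a::real_inner) \<Rightarrow> nat \<Rightarrow> 'a set \<Rightarrow> nat set \<Rightarrow> bool" where
  "Pset e n E S \<longleftrightarrow> (\<forall>x\<in>Vset e n S. \<forall>y\<in>Vset e n S. x \<in> E \<longrightarrow> y \<in> E)"

definition Edge :: "(nat \<Rightarrow> 'a::real_inner) \<Rightarrow> 'a set \<Rightarrow> nat \<Rightarrow> nat \<Rightarrow> bool" where
  "Edge e E u v \<longleftrightarrow> (\<forall>t. rot (e u) (e v) t ` E \<subseteq> E)"

lemma Edge_sym: "Edge e E u v \<Longrightarrow> Edge e E v u"
  unfolding Edge_def by (metis rot_swap image_cong)

lemma Edge_iff:
  fixes e :: "nat \<Rightarrow> 'a::euclidean_space"
  assumes "bij_betw e {..<n} Basis" "u < n" "v < n" "u \<noteq> v" "Edge e E u v"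
  shows "rot (e u) (e v) t x \<in> E \<longleftrightarrow> x \<in> E"
proof -
  have o: "e u \<bullet> e u = 1" "e v \<bullet> e v = 1" "e u \<bullet> e v = 0" using e_orth[OF assms(1)] assms by auto
  show ?thesis
  proof
    assume "rot (e u) (e v) t x \<in> E"
    then have "rot (e u) (e v) (- t) (rot (e u) (e v) t x) \<in> E"
      using assms(5) unfolding Edge_def by blast
    then show "x \<in> E" using rot_inv[OF o] by simp
  next
    assume "x \<in> E" then show "rot (e u) (e v) t x \<in> E" using assms(5) unfolding Edge_def by blast
  qed
qed

lemma Pset_insert:
  fixes e :: "nat \<Rightarrow> 'a::euclidean_space"
  assumes bij: "bij_betw e {..<n} Basis" and P: "Pset e n E S" and u: "u \<in> S" "u < n"
    and v: "v \<notin> S" "v < n" and edge: "Edge e E u v"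
  shows "Pset e n E (insert v S)"
proof -
  have uv: "u \<noteq> v" using u v by auto
  have o: "e u \<bullet> e u = 1" "e v \<bullet> e v = 1" "e u \<bullet> e v = 0" using e_orth[OF bij] u v uv by auto
  have key: "\<exists>t. rot (e u) (e v) t x \<in> Vset e n S" if x: "x \<in> Vset e n (insert v S)" for x
  proof -
    define xu where "xu = x \<bullet> e u"
    define xv where "xv = x \<bullet> e v"
    define r where "r = sqrt (xu\<^sup>2 + xv\<^sup>2)"
    obtain t where t: "sin t * xu + cos t * xv = 0"
    proof (cases "r = 0")
      case True
      then have "xv = 0" unfolding r_def by (simp add: add_nonneg_eq_0_iff)
      then show ?thesis using that[of 0] by simp
    next
      case False
      have "r \<ge> 0" unfolding r_def by simp
      then have r0: "r > 0" using False by linarith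
      have r2: "r\<^sup>2 = xu\<^sup>2 + xv\<^sup>2" unfolding r_def by simp
      have "(xu / r)\<^sup>2 + (- xv / r)\<^sup>2 = (xu\<^sup>2 + xv\<^sup>2) / r\<^sup>2"
        by (simp add: power_divide add_divide_distrib)
      also have "\<dots> = 1"
      proof -
        have "r\<^sup>2 \<noteq> 0" using r0 by simp
        then show ?thesis by (simp only: r2[symmetric]) simp
      qed
      finally have "(xu / r)\<^sup>2 + (- xv / r)\<^sup>2 = 1" .
      then obtain t where "xu / r = cos t" "- xv / r = sin t" by (rule sincos_total_2pi)
      then have "sin t * xu + cos t * xv = (- xv * xu + xu * xv) / r" using r0 by (simp add: field_simps)
      also have "\<dots> = 0" by simp
      finally show ?thesis using that by blast
    qed
    have "rot (e u) (e v) t x \<in> Vset e n S"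
      unfolding Vset_def
    proof (intro CollectI conjI allI impI)
      show "norm (rot (e u) (e v) t x) = 1" using rot_norm[OF o] x by (simp add: Vset_def)
      fix m assume m: "m < n" "m \<notin> S"
      show "rot (e u) (e v) t x \<bullet> e m = 0"
      proof (cases "m = v")
        case True
        then show ?thesis using rot_b[OF o(2) o(3)] t unfolding xu_def xv_def by simp
      next
        case False
        then have "m \<noteq> u" "m \<notin> insert v S" using m u by auto
        then have "rot (e u) (e v) t x \<bullet> e m = x \<bullet> e m"
          using e_orth[OF bij] m u v False by (intro rot_other) auto
        then show ?thesis using x m \<open>m \<notin> insert v S\<close> by (simp add: Vset_def)
      qed
    qed
    then show ?thesis by blast
  qed
  show ?thesis
    unfolding Pset_def
  proof (intro ballI impI)
    fix x y assume x: "x \<in> Vset e n (insert v S)" and y: "y \<in> Vset e n (insert v S)" and "x \<in> E"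
    obtain t where t: "rot (e u) (e v) t x \<in> Vset e n S" using key[OF x] by blast
    obtain s where s: "rot (e u) (e v) s y \<in> Vset e n S" using key[OF y] by blast
    have "rot (e u) (e v) t x \<in> E" using Edge_iff[OF bij u(2) v(2) uv edge] \<open>x \<in> E\<close> by blast
    then have "rot (e u) (e v) s y \<in> E" using P t s unfolding Pset_def by blast
    then show "y \<in> E" using Edge_iff[OF bij u(2) v(2) uv edge] by blast
  qed
qed

lemma Pset_single:
  fixes e :: "nat \<Rightarrow> 'a::euclidean_space"
  assumes bij: "bij_betw e {..<n} Basis" and u: "u < n" and w: "w < n" "w \<noteq> u" and edge: "Edge e E u w"
  shows "Pset e n E {u}"
proof -
  have o: "e u \<bullet> e u = 1" "e w \<bullet> e w = 1" "e u \<bullet> e w = 0" using e_orth[OF bij] u w by auto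
  have rep: "x = (x \<bullet> e u) *\<^sub>R e u" if "x \<in> Vset e n {u}" for x
    using that by (intro eq_by_coords[OF bij]) (auto simp: Vset_def e_orth[OF bij u])
  have pm: "x \<bullet> e u = 1 \<or> x \<bullet> e u = -1" if "x \<in> Vset e n {u}" for x
  proof -
    have "norm x = \<bar>x \<bullet> e u\<bar>" using rep[OF that] o
      by (metis norm_scaleR norm_eq_sqrt_inner real_sqrt_one mult.right_neutral)
    then show ?thesis using that by (auto simp: Vset_def)
  qed
  have neg: "rot (e u) (e w) pi x = - x" if "x \<in> Vset e n {u}" for x
  proof (rule eq_by_coords[OF bij], intro allI impI)
    fix m assume m: "m < n"
    have xw: "x \<bullet> e w = 0" using that w by (auto simp: Vset_def)
    show "rot (e u) (e w) pi x \<bullet> e m = - x \<bullet> e m"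
    proof (cases "m = u")
      case True then show ?thesis using rot_a[OF o(1) o(3)] xw by simp
    next
      case False
      show ?thesis
      proof (cases "m = w")
        case True then show ?thesis using rot_b[OF o(2) o(3)] xw by simp
      next
        case False
        have "rot (e u) (e w) pi x \<bullet> e m = x \<bullet> e m"
          using e_orth[OF bij] m u w False \<open>m \<noteq> u\<close> by (intro rot_other) auto
        moreover have "x \<bullet> e m = 0" using that m \<open>m \<noteq> u\<close> by (auto simp: Vset_def)
        ultimately show ?thesis by simp
      qed
    qed
  qed
  show ?thesis
    unfolding Pset_def
  proof (intro ballI impI)
    fix x y assume x: "x \<in> Vset e n {u}" and y: "y \<in> Vset e n {u}" and "x \<in> E"
    have "y = x \<or> y = - x"
    proof (cases "y \<bullet> e u = x \<bullet> e u")
      case True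
      then have "y = x" using rep[OF x] rep[OF y] by simp
      then show ?thesis ..
    next
      case False
      then have "y \<bullet> e u = - (x \<bullet> e u)" using pm[OF x] pm[OF y] by auto
      then have "y = - x" using rep[OF x] rep[OF y] by (metis scaleR_minus_left)
      then show ?thesis ..
    qed
    moreover have "rot (e u) (e w) pi x \<in> E" using edge \<open>x \<in> E\<close> unfolding Edge_def by blast
    then have "- x \<in> E" using neg[OF x] by simp
    ultimately show "y \<in> E" using \<open>x \<in> E\<close> by blast
  qed
qed

lemma crossing:
  assumes "R\<^sup>*\<^sup>* x y" "x \<in> S" "y \<notin> S"
  shows "\<exists>u v. R u v \<and> u \<in> S \<and> v \<notin> S"
  using assms by (induction rule: rtranclp_induct) auto

lemma sphere_from_edges:
  fixes e :: "nat \<Rightarrow> 'a::euclidean_space" and E :: "'a set"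
  assumes bij: "bij_betw e {..<n} Basis"
    and conn: "\<forall>w<n. (\<lambda>u v. u < n \<and> v < n \<and> u \<noteq> v \<and> Edge e E u v)\<^sup>*\<^sup>* u0 w"
    and u0: "u0 < n" and w0: "w0 < n" "w0 \<noteq> u0" "Edge e E u0 w0"
    and E: "E \<subseteq> sphere 0 1" "E \<noteq> {}"
  shows "E = sphere 0 1"
proof -
  let ?A = "\<lambda>u v. u < n \<and> v < n \<and> u \<noteq> v \<and> Edge e E u v"
  have grow: "Pset e n E {..<n}" if "S \<subseteq> {..<n}" "u0 \<in> S" "Pset e n E S" for S
    using that
  proof (induction "n - card S" arbitrary: S rule: less_induct)
    case less
    show ?case
    proof (cases "S = {..<n}")
      case True then show ?thesis using less by simp
    next
      case False
      then obtain w where w: "w < n" "w \<notin> S" using less.prems(1) by auto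
      obtain x y where xy: "?A x y" "x \<in> S" "y \<notin> S"
        using crossing[OF conn[rule_format, OF w(1)] less.prems(2) w(2)] by blast
      have fin: "finite S" using less.prems(1) finite_subset by blast
      have P': "Pset e n E (insert y S)"
        using Pset_insert[OF bij less.prems(3) xy(2) _ xy(3) _] xy(1) by blast
      have cS: "card S < n"
        using psubset_card_mono[of "{..<n}" S] less.prems(1) False by auto
      have "n - card (insert y S) < n - card S" using fin xy(3) cS by simp
      moreover have "insert y S \<subseteq> {..<n}" using less.prems(1) xy(1) by auto
      ultimately show ?thesis using less.hyps P' less.prems(2) by blast
    qed
  qed
  have P: "Pset e n E {..<n}"
    by (rule grow) (use u0 Pset_single[OF bij u0 w0] in auto)
  have V: "Vset e n {..<n} = sphere 0 1" by (auto simp: Vset_def)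
  obtain z where z: "z \<in> E" using E(2) by blast
  show ?thesis
  proof
    show "sphere 0 1 \<subseteq> E"
    proof
      fix y :: 'a assume "y \<in> sphere 0 1"
      moreover have "z \<in> sphere 0 1" using z E(1) by blast
      ultimately show "y \<in> E" using P z V unfolding Pset_def by blast
    qed
  qed (fact E(1))
qed


lemma refl_decomp:
  fixes H :: "'a::euclidean_space set"
  assumes "subspace H" "y \<in> H" "\<forall>w\<in>H. z \<bullet> w = 0"
  shows "refl_sub H (y + z) = y - z"
proof -
  have "orth_proj H (y + z) = y" using assms by (intro orth_proj_unique) auto
  then show ?thesis by (simp add: refl_sub_def algebra_simps scaleR_2)
qed

lemma decomp_exists:
  fixes H :: "'a::euclidean_space set"
  assumes "subspace H"
  obtains y z where "y \<in> H" "\<forall>w\<in>H. z \<bullet> w = 0" "x = y + z"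
proof -
  obtain y z where "y \<in> span H" "\<And>w. w \<in> span H \<Longrightarrow> orthogonal z w" "x = y + z"
    using orthogonal_subspace_decomp_exists[of H x] by blast
  moreover have "span H = H" using assms by (simp add: span_eq_iff)
  ultimately show ?thesis using that by (auto simp: orthogonal_def)
qed

lemma refl_scale:
  fixes H :: "'a::euclidean_space set"
  assumes "subspace H"
  shows "refl_sub H (c *\<^sub>R x) = c *\<^sub>R refl_sub H x"
proof -
  obtain y z where yz: "y \<in> H" "\<forall>w\<in>H. z \<bullet> w = 0" "x = y + z" using decomp_exists[OF assms] by blast
  have "refl_sub H x = y - z" using refl_decomp[OF assms yz(1,2)] yz(3) by simp
  moreover have "refl_sub H (c *\<^sub>R x) = c *\<^sub>R y - c *\<^sub>R z"
    using refl_decomp[OF assms, of "c *\<^sub>R y" "c *\<^sub>R z"] yz assms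
    by (simp add: subspace_scale scaleR_add_right)
  ultimately show ?thesis by (simp add: scaleR_diff_right)
qed

lemma refl_neg:
  fixes H :: "'a::euclidean_space set"
  assumes "subspace H"
  shows "refl_sub H (- x) = - refl_sub H x"
  using refl_scale[OF assms, of "-1" x] by simp

lemma refl_norm:
  fixes H :: "'a::euclidean_space set"
  assumes "subspace H"
  shows "norm (refl_sub H x) = norm x"
proof -
  obtain y z where yz: "y \<in> H" "\<forall>w\<in>H. z \<bullet> w = 0" "x = y + z" using decomp_exists[OF assms] by blast
  have r: "refl_sub H x = y - z" using refl_decomp[OF assms yz(1,2)] yz(3) by simp
  have zy: "z \<bullet> y = 0" using yz by blast
  have "(y - z) \<bullet> (y - z) = (y + z) \<bullet> (y + z)"
    using zy by (simp add: inner_diff_left inner_diff_right inner_add_left inner_add_right inner_commute)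
  then show ?thesis using r yz(3) by (simp add: norm_eq_sqrt_inner)
qed

lemma refl_orth_comp:
  fixes G :: "'a::euclidean_space set"
  assumes "subspace G"
  shows "refl_sub (orthogonal_comp G) x = - refl_sub G x"
proof -
  obtain y z where yz: "y \<in> G" "\<forall>w\<in>G. z \<bullet> w = 0" "x = y + z" using decomp_exists[OF assms] by blast
  have "z \<in> orthogonal_comp G" using yz(2) by (auto simp: orthogonal_comp_def orthogonal_def inner_commute)
  moreover have "\<forall>w\<in>orthogonal_comp G. y \<bullet> w = 0" using yz(1) by (auto simp: orthogonal_comp_def orthogonal_def)
  ultimately have "refl_sub (orthogonal_comp G) (z + y) = z - y"
    by (intro refl_decomp subspace_orthogonal_comp)
  moreover have "refl_sub G (y + z) = y - z" by (rule refl_decomp[OF assms yz(1,2)])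
  ultimately show ?thesis using yz(3) by (simp add: add.commute)
qed

lemma dim_orth_comp:
  fixes G :: "'a::euclidean_space set"
  assumes "subspace G"
  shows "dim (orthogonal_comp G) = DIM('a) - dim G"
proof -
  have "dim {y \<in> UNIV. \<forall>x \<in> G. orthogonal x y} + dim G = dim (UNIV::'a set)"
    by (rule dim_subspace_orthogonal_to_vectors) (use assms in auto)
  moreover have "{y \<in> UNIV. \<forall>x \<in> G. orthogonal x y} = orthogonal_comp G"
    by (auto simp: orthogonal_comp_def)
  ultimately show ?thesis by simp
qed

lemma refl_image_sphere:
  fixes H :: "'a::euclidean_space set"
  assumes "subspace H" "refl_sub H ` F = F"
  shows "refl_sub H ` (F \<inter> sphere 0 r) = F \<inter> sphere 0 r"
proof
  show "refl_sub H ` (F \<inter> sphere 0 r) \<subseteq> F \<inter> sphere 0 r"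
    using assms refl_norm[OF assms(1)] by auto
  show "F \<inter> sphere 0 r \<subseteq> refl_sub H ` (F \<inter> sphere 0 r)"
  proof
    fix y assume y: "y \<in> F \<inter> sphere 0 r"
    then obtain x where "x \<in> F" "y = refl_sub H x" using assms(2) by blast
    then show "y \<in> refl_sub H ` (F \<inter> sphere 0 r)" using y refl_norm[OF assms(1)] by auto
  qed
qed

lemma refl_image_scale:
  fixes H :: "'a::euclidean_space set"
  assumes "subspace H" "refl_sub H ` S = S"
  shows "refl_sub H ` ((\<lambda>x. c *\<^sub>R x) ` S) = (\<lambda>x. c *\<^sub>R x) ` S"
proof -
  have "refl_sub H ` ((\<lambda>x. c *\<^sub>R x) ` S) = (\<lambda>x. c *\<^sub>R x) ` (refl_sub H ` S)"
    unfolding image_image using refl_scale[OF assms(1)] by simp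
  then show ?thesis using assms(2) by simp
qed

lemma FK_from_E:
  fixes H :: "nat \<Rightarrow> 'a::euclidean_space set" and J :: "nat set"
  assumes subs: "\<forall>j\<in>J. subspace (H j)"
    and Eth: "\<forall>E. E \<subseteq> sphere 0 1 \<and> E \<noteq> {} \<and> closed E \<and> (\<forall>j\<in>J. refl_sub (H j) ` E = E) \<longrightarrow> E = sphere 0 1"
  shows "(\<forall>F. closed F \<and> (\<forall>j\<in>J. refl_sub (H j) ` F = F) \<longrightarrow> (\<exists>R::real set. F = (\<Union>r\<in>R. sphere 0 r))) \<and>
     (\<forall>K. convex_body K \<and> (\<forall>j\<in>J. refl_sub (H j) ` K = K) \<longrightarrow> (\<exists>r>0. K = cball 0 r))"
proof -
  have sph: "sphere 0 (norm x) \<subseteq> F"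
    if F: "closed F" "\<forall>j\<in>J. refl_sub (H j) ` F = F" and x: "x \<in> F" for F x
  proof (cases "x = 0")
    case True then show ?thesis using x by auto
  next
    case False
    define r where "r = norm x"
    have r0: "r > 0" using False by (simp add: r_def)
    define E where "E = (\<lambda>y. (1 / r) *\<^sub>R y) ` (F \<inter> sphere 0 r)"
    have "E \<subseteq> sphere 0 1" using r0 by (auto simp: E_def)
    moreover have "E \<noteq> {}" using x by (auto simp: E_def r_def)
    moreover have "closed E" unfolding E_def using F(1) by (intro closed_scaling closed_Int) auto
    moreover have "\<forall>j\<in>J. refl_sub (H j) ` E = E"
      unfolding E_def using subs F(2) by (intro ballI refl_image_scale refl_image_sphere) auto
    ultimately have E1: "E = sphere 0 1" using Eth by blast
    show ?thesis
    proof
      fix y :: 'a assume y: "y \<in> sphere 0 (norm x)"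
      then have ny: "norm y = r" by (simp add: r_def)
      have "norm ((1 / r) *\<^sub>R y) = \<bar>1 / r\<bar> * norm y" by simp
      also have "\<dots> = 1" unfolding ny using r0 by simp
      finally have "norm ((1 / r) *\<^sub>R y) = 1" .
      then have "(1 / r) *\<^sub>R y \<in> sphere 0 1" by (simp only: mem_sphere_0)
      then have "(1 / r) *\<^sub>R y \<in> E" using E1 by blast
      then obtain z where z: "z \<in> F \<inter> sphere 0 r" "(1 / r) *\<^sub>R y = (1 / r) *\<^sub>R z" unfolding E_def by blast
      then have "y = z" using r0 by simp
      then show "y \<in> F" using z by simp
    qed
  qed
  have partF: "\<exists>R::real set. F = (\<Union>r\<in>R. sphere 0 r)"
    if F: "closed F" "\<forall>j\<in>J. refl_sub (H j) ` F = F" for F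
  proof (intro exI)
    show "F = (\<Union>r\<in>norm ` F. sphere 0 r)"
    proof
      show "F \<subseteq> (\<Union>r\<in>norm ` F. sphere 0 r)" by auto
      show "(\<Union>r\<in>norm ` F. sphere 0 r) \<subseteq> F" using sph[OF F] by auto
    qed
  qed
  have partK: "\<exists>r>0. K = cball 0 r"
    if K: "convex_body K" "\<forall>j\<in>J. refl_sub (H j) ` K = K" for K
  proof -
    have cK: "compact K" "convex K" "interior K \<noteq> {}" using K(1) by (auto simp: convex_body_def)
    then have "K \<noteq> {}" by auto
    then obtain x0 where x0: "x0 \<in> K" "\<forall>y\<in>K. norm y \<le> norm x0"
      using continuous_attains_sup[OF cK(1), of norm] continuous_on_norm_id by blast
    define r where "r = norm x0"
    have sK: "sphere 0 r \<subseteq> K" unfolding r_def using sph[OF compact_imp_closed[OF cK(1)] K(2) x0(1)] .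
    have Kc: "K \<subseteq> cball 0 r" using x0 by (auto simp: r_def)
    have r0: "r > 0"
    proof (rule ccontr)
      assume "\<not> r > 0"
      then have "K \<subseteq> {0}" using Kc by (auto simp: r_def)
      then have "interior K \<subseteq> interior {0}" by (rule interior_mono)
      then show False using cK(3) by simp
    qed
    have "cball 0 r \<subseteq> K"
    proof
      fix y :: 'a assume y: "y \<in> cball 0 r"
      obtain b :: 'a where b: "b \<in> Basis" using nonempty_Basis by blast
      define u where "u = (if y = 0 then r *\<^sub>R b else (r / norm y) *\<^sub>R y)"
      have nu: "norm u = r" using r0 b by (auto simp: u_def)
      have uK: "u \<in> K" "- u \<in> K" using sK nu by auto
      define lam where "lam = norm y / r"
      have l01: "0 \<le> lam" "lam \<le> 1" using y r0 by (auto simp: lam_def)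
      have yeq: "y = ((1 + lam) / 2) *\<^sub>R u + ((1 - lam) / 2) *\<^sub>R (- u)"
      proof (cases "y = 0")
        case True then show ?thesis by (simp add: lam_def u_def)
      next
        case False
        have "((1 + lam) / 2) *\<^sub>R u + ((1 - lam) / 2) *\<^sub>R (- u) = ((1 + lam) / 2 - (1 - lam) / 2) *\<^sub>R u"
          by (simp add: scaleR_diff_left)
        also have "(1 + lam) / 2 - (1 - lam) / 2 = lam" by (simp add: field_simps)
        finally have "((1 + lam) / 2) *\<^sub>R u + ((1 - lam) / 2) *\<^sub>R (- u) = lam *\<^sub>R u" .
        also have "\<dots> = y" using False r0 by (simp add: lam_def u_def)
        finally show ?thesis by simp
      qed
      have s1: "0 \<le> (1 + lam) / 2" "0 \<le> (1 - lam) / 2" using l01 by auto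
      have s2: "(1 + lam) / 2 + (1 - lam) / 2 = 1" by (simp add: field_simps)
      show "y \<in> K" unfolding yeq by (rule convexD[OF cK(2) uK(1) uK(2) s1 s2])
    qed
    then show ?thesis using Kc r0 by blast
  qed
  show ?thesis using partF partK by blast
qed


lemma Suc_mod_lt:
  assumes "l < (d::nat)"
  shows "Suc l mod d = (if Suc l = d then 0 else Suc l)"
  using assms by (auto simp: mod_if)

lemma tau_ONF2:
  fixes e :: "nat \<Rightarrow> 'a::euclidean_space"
  assumes bij: "bij_betw e {..<n} Basis"
    and d: "1 \<le> d" "2 * d \<le> n"
    and tau_def: "tau = (\<lambda>j l. if j = p then d + Suc l mod d else d + min ((j - 1) * d) (n - 2 * d) + l)"
    and j: "1 \<le> j" "j \<le> p"
  shows "ONF2 e (\<lambda>l. e (tau j l)) d"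
proof -
  have tau_rng: "d \<le> tau j l \<and> tau j l < n" if "1 \<le> j" "j \<le> p" "l < d" for j l
  proof (cases "j = p")
    case True
    have lt: "Suc l mod d < d" using d by simp
    have "tau j l = d + Suc l mod d" by (simp add: tau_def True)
    then show ?thesis using lt d by linarith
  next
    case False
    have "min ((j - 1) * d) (n - 2 * d) + l < n - d" using that d by linarith
    then show ?thesis using False d by (simp add: tau_def)
  qed
  have tau_inj: "l = l'" if "1 \<le> j" "j \<le> p" "l < d" "l' < d" "tau j l = tau j l'" for j l l'
  proof (cases "j = p")
    case True
    then have "Suc l mod d = Suc l' mod d" using that by (simp add: tau_def)
    then show ?thesis using that Suc_mod_lt[of l d] Suc_mod_lt[of l' d] by (auto split: if_splits)
  next
    case False
    then show ?thesis using that by (simp add: tau_def)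
  qed
  have onf2: "ONF2 e (\<lambda>l. e (tau j l)) d" if "1 \<le> j" "j \<le> p" for j
    unfolding ONF2_def ONF_def
  proof (intro conjI allI impI)
    fix l l' assume l: "l < d" "l' < d"
    show "e l \<bullet> e l' = (if l = l' then 1 else 0)" using e_orth[OF bij] l d by simp
    show "e (tau j l) \<bullet> e (tau j l') = (if l = l' then 1 else 0)"
      using e_orth[OF bij] tau_rng[OF that l(1)] tau_rng[OF that l(2)] tau_inj[OF that l] by auto
    show "e l \<bullet> e (tau j l') = 0"
      using e_orth[OF bij] tau_rng[OF that l(2)] l d by auto
  qed
  show ?thesis by (rule onf2[OF j])
qed

lemma E_sphere:
  fixes e :: "nat \<Rightarrow> 'a::euclidean_space" and E :: "'a set"
  assumes bij: "bij_betw e {..<n} Basis"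
    and d: "1 \<le> d" "2 * d \<le> n" and p: "n \<le> p * d" "2 \<le> p"
    and th: "\<theta> d = 1" "inj_on \<theta> {..d}" "\<not> module.dependent (\<lambda>r x. of_int r * x) (\<theta> ` {..d})"
    and tau_def: "tau = (\<lambda>j l. if j = p then d + Suc l mod d else d + min ((j - 1) * d) (n - 2 * d) + l)"
    and m_def: "m = (if d = 1 then p - 1 else p)"
    and comp: "\<forall>j\<in>{1..m}. \<forall>x. \<rho> 0 (\<rho> j x) = mrot e (\<lambda>l. e (tau j l)) d (\<lambda>l. 2 * pi * \<theta> l) x"
    and E: "E \<subseteq> sphere 0 1" "E \<noteq> {}" "closed E" "\<forall>j\<in>{0..m}. \<rho> j ` E = E"
  shows "E = sphere 0 1"
proof -
  have m: "1 \<le> m" "m \<le> p" "\<forall>j. 1 \<le> j \<and> j < p \<longrightarrow> j \<in> {1..m}" "d \<ge> 2 \<Longrightarrow> p \<in> {1..m}"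
    using p d by (auto simp: m_def)
  have tau_lt: "tau j l < p \<Longrightarrow> True" for j l by simp
  have tau_rng: "d \<le> tau j l \<and> tau j l < n" if "1 \<le> j" "j \<le> p" "l < d" for j l
  proof (cases "j = p")
    case True
    have lt: "Suc l mod d < d" using d by simp
    have "tau j l = d + Suc l mod d" by (simp add: tau_def True)
    then show ?thesis using lt d by linarith
  next
    case False
    have "min ((j - 1) * d) (n - 2 * d) + l < n - d" using that d by linarith
    then show ?thesis using False d by (simp add: tau_def)
  qed
  have tau_inj: "l = l'" if "1 \<le> j" "j \<le> p" "l < d" "l' < d" "tau j l = tau j l'" for j l l'
  proof (cases "j = p")
    case True
    then have "Suc l mod d = Suc l' mod d" using that by (simp add: tau_def)
    then show ?thesis using that Suc_mod_lt[of l d] Suc_mod_lt[of l' d] by (auto split: if_splits)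
  next
    case False
    then show ?thesis using that by (simp add: tau_def)
  qed
  have onf2: "ONF2 e (\<lambda>l. e (tau j l)) d" if "1 \<le> j" "j \<le> p" for j
    unfolding ONF2_def ONF_def
  proof (intro conjI allI impI)
    fix l l' assume l: "l < d" "l' < d"
    show "e l \<bullet> e l' = (if l = l' then 1 else 0)" using e_orth[OF bij] l d by simp
    show "e (tau j l) \<bullet> e (tau j l') = (if l = l' then 1 else 0)"
      using e_orth[OF bij] tau_rng[OF that l(1)] tau_rng[OF that l(2)] tau_inj[OF that l] by auto
    show "e l \<bullet> e (tau j l') = 0"
      using e_orth[OF bij] tau_rng[OF that l(2)] l d by auto
  qed
  have edge: "Edge e E l (tau j l)" if j: "j \<in> {1..m}" and l: "l < d" for j l
  proof -
    have jp: "1 \<le> j" "j \<le> p" using j m by auto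
    have "(\<lambda>x. \<rho> 0 (\<rho> j x)) ` E = E"
    proof -
      have "(\<lambda>x. \<rho> 0 (\<rho> j x)) ` E = \<rho> 0 ` (\<rho> j ` E)" by (simp add: image_image)
      also have "\<dots> = E" using E(4) j by auto
      finally show ?thesis .
    qed
    then have gen: "mrot e (\<lambda>l. e (tau j l)) d (\<lambda>l. 2 * pi * \<theta> l) ` E = E"
      using comp j by simp
    show ?thesis unfolding Edge_def
    proof
      fix t
      have "mrot e (\<lambda>l. e (tau j l)) d (\<lambda>l'. if l' = l then t else 0) ` E \<subseteq> E"
        by (rule mrot_all[OF onf2[OF jp] E(3) gen th])
      then show "rot (e l) (e (tau j l)) t ` E \<subseteq> E"
        using mrot_single[OF l, of e "\<lambda>l. e (tau j l)" t] by simp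
    qed
  qed
  let ?A = "\<lambda>u v. u < n \<and> v < n \<and> u \<noteq> v \<and> Edge e E u v"
  have adj1: "?A l (tau j l)" "?A (tau j l) l" if j: "j \<in> {1..m}" and l: "l < d" for j l
  proof -
    have jp: "1 \<le> j" "j \<le> p" using j m by auto
    have r: "d \<le> tau j l" "tau j l < n" using tau_rng[OF jp l] by auto
    show "?A l (tau j l)" using r l d edge[OF j l] by auto
    show "?A (tau j l) l" using r l d Edge_sym[OF edge[OF j l]] by auto
  qed
  have block: "?A\<^sup>*\<^sup>* 0 l" if "l < d" for l
    using that
  proof (induction l)
    case 0 then show ?case by simp
  next
    case (Suc l)
    have d2: "d \<ge> 2" using Suc.prems by simp
    have t1: "tau p l = d + Suc l" using Suc.prems Suc_mod_lt[of l d] by (simp add: tau_def)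
    have t2: "tau 1 (Suc l) = d + Suc l" using p d by (simp add: tau_def)
    have a1: "?A l (d + Suc l)" using adj1(1)[OF m(4)[OF d2], of l] Suc.prems t1 by simp
    have a2: "?A (d + Suc l) (Suc l)"
      using adj1(2)[of 1 "Suc l"] m Suc.prems t2 p by auto
    have h0: "?A\<^sup>*\<^sup>* 0 l" using Suc by simp
    show ?case by (rule rtranclp.rtrancl_into_rtrancl[OF rtranclp.rtrancl_into_rtrancl[OF h0 a1] a2])
  qed
  have rest: "\<exists>j l. j \<in> {1..m} \<and> l < d \<and> tau j l = w" if w: "d \<le> w" "w < n" for w
  proof -
    define q where "q = w - d"
    have q: "q < n - d" "w = d + q" using w unfolding q_def by auto
    have pd2: "n - 2 * d \<le> (p - 2) * d" using p d by (simp add: diff_mult_distrib)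
    show ?thesis
    proof (cases "q div d * d \<le> n - 2 * d")
      case True
      have "q div d * d \<le> (p - 2) * d" using True pd2 by linarith
      then have "q div d \<le> p - 2" using d by simp
      then have j: "q div d + 1 \<in> {1..m}" "q div d + 1 \<noteq> p" using m p by auto
      have "tau (q div d + 1) (q mod d) = d + q div d * d + q mod d"
        using j(2) True by (simp add: tau_def)
      also have "\<dots> = w" using q(2) by simp
      finally show ?thesis using j(1) d by (intro exI[of _ "q div d + 1"] exI[of _ "q mod d"]) simp
    next
      case False
      then have qge: "q > n - 2 * d" using div_mult_mod_eq[of q d] by linarith
      have j: "p - 1 \<in> {1..m}" "p - 1 \<noteq> p" using m p by auto
      have mn: "min ((p - 1 - 1) * d) (n - 2 * d) = n - 2 * d" using pd2 by (simp add: numeral_2_eq_2)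
      have "tau (p - 1) (q - (n - 2 * d)) = d + (n - 2 * d) + (q - (n - 2 * d))"
        using j(2) mn by (simp add: tau_def)
      also have "\<dots> = w" using q qge by simp
      finally show ?thesis using j(1) q qge d
        by (intro exI[of _ "p - 1"] exI[of _ "q - (n - 2 * d)"]) auto
    qed
  qed
  have conn: "\<forall>w<n. ?A\<^sup>*\<^sup>* 0 w"
  proof (intro allI impI)
    fix w assume w: "w < n"
    show "?A\<^sup>*\<^sup>* 0 w"
    proof (cases "w < d")
      case True then show ?thesis by (rule block)
    next
      case False
      then have "d \<le> w" by simp
      then obtain j l where jl: "j \<in> {1..m}" "l < d" "tau j l = w" using rest[OF _ w] by blast
      have a: "?A l w" using adj1(1)[OF jl(1) jl(2)] jl(3) by simp
      show ?thesis by (rule rtranclp.rtrancl_into_rtrancl[OF block[OF jl(2)] a])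
    qed
  qed
  have a0: "?A 0 (tau 1 0)" using adj1(1)[of 1 0] m d by auto
  have u0: "(0::nat) < n" using d by simp
  have f: "tau 1 0 < n" "tau 1 0 \<noteq> 0" "Edge e E 0 (tau 1 0)" using a0 by auto
  show ?thesis by (rule sphere_from_edges[OF bij conn u0 f E(1) E(2)])
qed


theorem corollary3p9:
  fixes i :: nat
  assumes "DIM('a::euclidean_space) \<ge> 2"
    and "1 \<le> i" and "i \<le> DIM('a) - 1"
  shows "\<exists>H :: nat \<Rightarrow> 'a set.
     (\<forall>j\<in>{1..num_refl DIM('a) i}. subspace (H j) \<and> dim (H j) = i) \<and>
     (\<forall>E. E \<subseteq> sphere 0 1 \<and> E \<noteq> {} \<and> closed E \<and>
          (\<forall>j\<in>{1..num_refl DIM('a) i}. refl_sub (H j) ` E = E)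
          \<longrightarrow> E = sphere 0 1) \<and>
     (\<forall>F. closed F \<and> (\<forall>j\<in>{1..num_refl DIM('a) i}. refl_sub (H j) ` F = F)
          \<longrightarrow> (\<exists>R::real set. F = (\<Union>r\<in>R. sphere 0 r))) \<and>
     (\<forall>K. convex_body K \<and> (\<forall>j\<in>{1..num_refl DIM('a) i}. refl_sub (H j) ` K = K)
          \<longrightarrow> (\<exists>r>0. K = cball 0 r))"
proof -
  define n where "n = DIM('a)"
  have n2: "2 \<le> n" and i: "1 \<le> i" "i \<le> n - 1" using assms by (auto simp: n_def)
  define d where "d = (if 2 * i \<le> n then i else n - i)"
  define dual where "dual \<longleftrightarrow> \<not> 2 * i \<le> n"
  have d: "1 \<le> d" "2 * d \<le> n" using n2 i by (auto simp: d_def)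
  have di: "(if dual then n - d else d) = i" using i by (auto simp: d_def dual_def)
  define p where "p = nat \<lceil>real n / real d\<rceil>"
  have dpos: "real d > 0" using d by simp
  have ge0: "real n / real d \<ge> 0" by simp
  have rp: "real p = of_int \<lceil>real n / real d\<rceil>" unfolding p_def using ge0 by simp
  have "real n / real d \<le> real p" unfolding rp by (rule le_of_int_ceiling)
  then have "real n \<le> real p * real d" using dpos by (simp add: divide_le_eq)
  then have pd: "n \<le> p * d" by (metis of_nat_le_iff of_nat_mult)
  have "2 \<le> real n / real d" using d dpos by (simp add: le_divide_eq)
  then have "\<lceil>2::real\<rceil> \<le> \<lceil>real n / real d\<rceil>" by (rule ceiling_mono)
  then have "2 \<le> \<lceil>real n / real d\<rceil>" by simp
  then have p2: "2 \<le> p" unfolding p_def by linarith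
  have p1: "d = 1 \<Longrightarrow> p = n" unfolding p_def by simp
  define m where "m = (if d = 1 then p - 1 else p)"
  have k: "num_refl n i = Suc m"
  proof (cases "i = 1 \<or> i = n - 1")
    case True
    have "d = 1" using True i n2 by (auto simp: d_def)
    then show ?thesis using True p1 n2 by (simp add: num_refl_def m_def)
  next
    case False
    have "d \<noteq> 1" using False i n2 by (auto simp: d_def)
    then show ?thesis using False
      by (auto simp: num_refl_def m_def p_def d_def)
  qed
  obtain e where bij: "bij_betw e {..<n} (Basis :: 'a set)"
    using ex_bij_betw_nat_finite[of "Basis :: 'a set"] by (auto simp: n_def atLeast0LessThan)
  obtain \<theta> :: "nat \<Rightarrow> real" where th: "\<theta> d = 1" "inj_on \<theta> {..d}" "\<not> module.dependent (\<lambda>r x. of_int r * x) (\<theta> ` {..d})"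
    using exists_kron_theta[of d] by blast
  define tau where "tau = (\<lambda>j l. if j = p then d + Suc l mod d else d + min ((j - 1) * d) (n - 2 * d) + l)"
  define \<alpha> where "\<alpha> = (\<lambda>l. - (pi * \<theta> l))"
  define G where "G = (\<lambda>j. if j = 0 then span (e ` {..<d})
      else span ((\<lambda>l. cos (\<alpha> l) *\<^sub>R e l + sin (\<alpha> l) *\<^sub>R e (tau j l)) ` {..<d}))"
  define H where "H = (\<lambda>j. if dual then orthogonal_comp (G (j - 1)) else G (j - 1))"
  have onf2: "ONF2 e (\<lambda>l. e (tau j l)) d" if "1 \<le> j" "j \<le> p" for j
    by (rule tau_ONF2[OF bij d tau_def that])
  have onfe: "ONF e d" using onf2[of 1] p2 by (simp add: ONF2_def)
  have Gsub: "subspace (G j) \<and> dim (G j) = d" if "j \<le> p" for j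
  proof (cases "j = 0")
    case True then show ?thesis using ONF_independent[OF onfe] by (simp add: G_def)
  next
    case False
    have "ONF (\<lambda>l. cos (\<alpha> l) *\<^sub>R e l + sin (\<alpha> l) *\<^sub>R e (tau j l)) d"
      using ONF_twist[OF onf2] False that by simp
    then show ?thesis using False ONF_independent by (simp add: G_def)
  qed
  have Hsub: "subspace (H j) \<and> dim (H j) = i" if "1 \<le> j" "j \<le> Suc p" for j
  proof -
    have g: "subspace (G (j - 1))" "dim (G (j - 1)) = d" using Gsub[of "j - 1"] that by auto
    show ?thesis
    proof (cases dual)
      case True
      then show ?thesis using g di subspace_orthogonal_comp dim_orth_comp[OF g(1)]
        by (simp add: H_def n_def)
    next
      case False
      then show ?thesis using g di by (simp add: H_def)
    qed
  qed
  have angle: "(\<lambda>l. - (2 * \<alpha> l)) = (\<lambda>l. 2 * pi * \<theta> l)" by (simp add: \<alpha>_def mult.assoc)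
  have comp: "refl_sub (H 1) (refl_sub (H (Suc j)) x) = mrot e (\<lambda>l. e (tau j l)) d (\<lambda>l. 2 * pi * \<theta> l) x"
    if "1 \<le> j" "j \<le> p" for j x
  proof -
    have base: "refl_sub (G 0) (refl_sub (G j) x) = mrot e (\<lambda>l. e (tau j l)) d (\<lambda>l. 2 * pi * \<theta> l) x"
      using refl_comp[OF onf2[OF that], of \<alpha> x] that unfolding angle by (simp add: G_def)
    show ?thesis
    proof (cases dual)
      case True
      have s0: "subspace (G 0)" and sj: "subspace (G j)" using Gsub that by auto
      have "refl_sub (H 1) (refl_sub (H (Suc j)) x) = - refl_sub (G 0) (- refl_sub (G j) x)"
        using True by (simp add: H_def refl_orth_comp[OF s0] refl_orth_comp[OF sj])
      also have "\<dots> = refl_sub (G 0) (refl_sub (G j) x)" by (simp add: refl_neg[OF s0])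
      finally show ?thesis using base by simp
    next
      case False
      then show ?thesis using base by (simp add: H_def)
    qed
  qed
  have mp: "m \<le> p" by (simp add: m_def)
  have Eth: "\<forall>E. E \<subseteq> sphere 0 1 \<and> E \<noteq> {} \<and> closed E \<and> (\<forall>j\<in>{1..Suc m}. refl_sub (H j) ` E = E)
      \<longrightarrow> E = sphere 0 1"
  proof (intro allI impI)
    fix E :: "'a set"
    assume E: "E \<subseteq> sphere 0 1 \<and> E \<noteq> {} \<and> closed E \<and> (\<forall>j\<in>{1..Suc m}. refl_sub (H j) ` E = E)"
    have inv: "\<forall>j\<in>{0..m}. (\<lambda>j. refl_sub (H (Suc j))) j ` E = E" using E by auto
    have cmp: "\<forall>j\<in>{1..m}. \<forall>x. (\<lambda>j. refl_sub (H (Suc j))) 0 ((\<lambda>j. refl_sub (H (Suc j))) j x)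
        = mrot e (\<lambda>l. e (tau j l)) d (\<lambda>l. 2 * pi * \<theta> l) x"
      using comp mp by auto
    show "E = sphere 0 1"
      by (rule E_sphere[OF bij d pd p2 th tau_def m_def cmp]) (use E inv in auto)
  qed
  have subs: "\<forall>j\<in>{1..Suc m}. subspace (H j)" using Hsub mp by auto
  note FK = FK_from_E[OF subs Eth]
  show ?thesis
    unfolding n_def[symmetric] k
    using Hsub mp Eth FK by (intro exI[of _ H]) auto
qed


end
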